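(* In the Cucker–Smale setting below, assume $\sum_{p=0}^{\infty}\ln\left(\frac{e^{\tilde K(t_{2p+2}-t_{2p+1})}}{2-e^{\tilde K(t_{2p+2}-t_{2p+1})}}\right)<+\infty$. Then for all $t\ge0$, $$d_V(t)\le\bar M^0:=e^{\sum_{p=0}^{\infty}\ln\left(\frac{e^{\tilde K(t_{2p+2}-t_{2p+1})}}{2-e^{\tilde K(t_{2p+2}-t_{2p+1})}}\right)}d_V(0).$$
   Context: Setting: $N\ge2$; $\tilde\psi:\mathbb{R}\to\mathbb{R}$ positive, bounded, continuous, with $\tilde K:=\|\tilde\psi\|_\infty$ and $\int_0^\infty\min_{r\in[0,x]}\tilde\psi(r)dx=+\infty$; $\{t_n\}_{n\in\mathbb{N}_0}$ increasing, nonnegative, $t_0=0$, $t_n\to\infty$, with $t_{2n+2}-t_{2n+1}<\frac{\ln2}{\tilde K}$ and $t_{2n+1}-t_{2n}>\frac1{\tilde K}$ for all $n$; $\alpha(0)=1$, $\alpha=1$ on $(t_{2n},t_{2n+1})$, $\alpha=-1$ on $[t_{2n+1},t_{2n+2}]$. $\{(x_i,v_i)\}$ solves $x_i'=v_i$, $v_i'(t)=\frac1{N-1}\sum_{j\ne i}\alpha(t)\tilde\psi(|x_i(t)-x_j(t)|)(v_j(t)-v_i(t))$, $t>0$, $x_i(0)=x_i^0$, $v_i(0)=v_i^0\in\mathbb{R}^d$ (continuous, $C^1$ on each $(t_n,t_{n+1})$). $d_V(t):=\max_{i,j}|v_i(t)-v_j(t)|$. *)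

theory Defs
  imports "HOL-Analysis.Analysis"
begin

definition alpha_sw :: "(nat \<Rightarrow> real) \<Rightarrow> real \<Rightarrow> real" where
  "alpha_sw ts t = (if t = 0 then 1
     else if (\<exists>n. ts (2*n) < t \<and> t < ts (2*n+1)) then 1 else -1)"

definition dV :: "nat \<Rightarrow> (nat \<Rightarrow> real \<Rightarrow> 'a::real_normed_vector) \<Rightarrow> real \<Rightarrow> real" where
  "dV N v t = Max {norm (v i t - v j t) | i j. i < N \<and> j < N}"

end

theory Submission
  imports Defs
begin

lemma dini_max:
  fixes f f' :: "'p \<Rightarrow> real \<Rightarrow> real"
  assumes finP: "finite P" and ab: "a \<le> b"
    and cont: "\<And>p. p \<in> P \<Longrightarrow> continuous_on {a..b} (f p)"
    and der: "\<And>p t. p \<in> P \<Longrightarrow> t \<in> {a<..<b} \<Longrightarrow> (f p has_real_derivative f' p t) (at t)"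
    and key: "\<And>p t. p \<in> P \<Longrightarrow> t \<in> {a<..<b} \<Longrightarrow> (\<forall>q\<in>P. f q t \<le> f p t) \<Longrightarrow> f' p t \<le> 0"
    and M: "\<And>q. q \<in> P \<Longrightarrow> f q a \<le> M"
  shows "\<And>p. p \<in> P \<Longrightarrow> f p b \<le> M"
proof -
  have main: "f p b \<le> M + e * (b - a) + e" if p: "p \<in> P" and e: "e > 0" for p e
  proof -
    define bnd where "bnd x = M + e * (x - a) + e" for x
    define S where "S = {x\<in>{a..b}. \<forall>p\<in>P. f p x \<le> bnd x}"
    have "S = {a..b} \<inter> (\<Inter>p\<in>P. {x\<in>{a..b}. f p x \<le> bnd x})" unfolding S_def by auto
    moreover have "closed {x\<in>{a..b}. f p x \<le> bnd x}" if "p \<in> P" for p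
      by (rule continuous_on_closed_Collect_le) (auto simp: bnd_def intro!: cont that continuous_intros)
    ultimately have clS: "closed S" by auto
    have aS: "a \<in> S" unfolding S_def bnd_def using ab M e by (auto intro: order_trans[OF M] simp: less_imp_le)
    have bdd: "bdd_above S" unfolding S_def by (auto intro!: bdd_aboveI[where M=b])
    define s where "s = Sup S"
    have sS: "s \<in> S" unfolding s_def using clS aS bdd closed_contains_Sup by blast
    have as: "a \<le> s" unfolding s_def using aS bdd by (rule cSup_upper)
    have sb: "s \<le> b" using sS unfolding S_def by auto
    have "s = b"
    proof (rule ccontr)
      assume "s \<noteq> b"
      with sb have sb': "s < b" by auto
      have ev: "\<forall>p\<in>P. eventually (\<lambda>y. s < y \<longrightarrow> f p y \<le> bnd y) (at s within {a..b})"
      proof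
        fix p assume p: "p \<in> P"
        have fs: "f p s \<le> bnd s" using sS p unfolding S_def by auto
        show "eventually (\<lambda>y. s < y \<longrightarrow> f p y \<le> bnd y) (at s within {a..b})"
        proof (cases "f p s < bnd s")
          case True
          have "(f p \<longlongrightarrow> f p s) (at s within {a..b})"
            using cont[OF p] as sb unfolding continuous_on_def by auto
          from order_tendstoD(2)[OF this True]
          show ?thesis
          proof eventually_elim
            case (elim y)
            show ?case
            proof
              assume "s < y"
              hence "e * (s - a) \<le> e * (y - a)" using e by (intro mult_left_mono) auto
              thus "f p y \<le> bnd y" using elim by (simp add: bnd_def)
            qed
          qed
        next
          case False
          with fs have eq: "f p s = bnd s" by auto
          have "s \<noteq> a" using eq M[OF p] e by (auto simp: bnd_def)
          with as sb' have sI: "s \<in> {a<..<b}" by auto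
          have "\<forall>q\<in>P. f q s \<le> f p s" using sS eq unfolding S_def by auto
          from key[OF p sI this] have d0: "f' p s < e" using e by auto
          have "(f p has_real_derivative f' p s) (at s within {a..b})"
            using der[OF p sI] by (rule has_field_derivative_at_within)
          hence "((\<lambda>y. (f p y - f p s) / (y - s)) \<longlongrightarrow> f' p s) (at s within {a..b})"
            by (simp add: has_field_derivative_iff)
          from order_tendstoD(2)[OF this d0]
          show ?thesis
          proof eventually_elim
            case (elim y)
            show ?case
            proof
              assume ys: "s < y"
              hence "f p y - f p s < e * (y - s)" using elim by (simp add: divide_less_eq)
              thus "f p y \<le> bnd y" using eq by (simp add: bnd_def algebra_simps)
            qed
          qed
        qed
      qed
      have "eventually (\<lambda>y. \<forall>p\<in>P. s < y \<longrightarrow> f p y \<le> bnd y) (at s within {a..b})"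
        using eventually_ball_finite[OF finP ev] .
      then obtain d where d: "d > 0" and dd: "\<And>y. y \<in> {a..b} \<Longrightarrow> y \<noteq> s \<Longrightarrow> dist y s < d \<Longrightarrow> \<forall>p\<in>P. s < y \<longrightarrow> f p y \<le> bnd y"
        unfolding eventually_at by blast
      define y where "y = min b (s + d/2)"
      have y1: "s < y" using sb' d by (auto simp: y_def)
      have y2: "y \<in> {a..b}" using as y1 by (auto simp: y_def)
      have "dist y s < d" using y1 d by (auto simp: y_def dist_real_def)
      with dd[OF y2] y1 y2 have "y \<in> S" unfolding S_def by auto
      hence "y \<le> s" unfolding s_def using bdd by (rule cSup_upper)
      with y1 show False by auto
    qed
    with sS p show ?thesis unfolding S_def bnd_def by auto
  qed
  fix p assume p: "p \<in> P"
  show "f p b \<le> M"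
  proof (rule ccontr)
    assume "\<not> f p b \<le> M"
    define e where "e = (f p b - M) / (b - a + 2)"
    have e0: "e > 0" using \<open>\<not> f p b \<le> M\<close> ab by (auto simp: e_def)
    have "e * (b - a + 2) = f p b - M" using ab by (simp add: e_def)
    hence "M + e * (b - a) + e < f p b" using e0 by (simp add: algebra_simps)
    with main[OF p e0] show False by auto
  qed
qed
lemma normsq_deriv:
  fixes u :: "real \<Rightarrow> 'a::real_inner"
  assumes "(u has_vector_derivative u') (at t)"
  shows "((\<lambda>s. norm (u s)^2) has_real_derivative 2 * inner (u t) u') (at t)"
proof -
  have d: "(u has_derivative (\<lambda>h. h *\<^sub>R u')) (at t)" using assms by (simp add: has_vector_derivative_def)
  have "((\<lambda>s. inner (u s) (u s)) has_derivative (\<lambda>h. inner (u t) (h *\<^sub>R u') + inner (h *\<^sub>R u') (u t))) (at t)"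
    by (rule has_derivative_inner[OF d d])
  moreover have "(\<lambda>h. inner (u t) (h *\<^sub>R u') + inner (h *\<^sub>R u') (u t)) = (*) (2 * inner (u t) u')"
    by (auto simp: inner_commute algebra_simps)
  ultimately show ?thesis by (simp add: has_field_derivative_def power2_norm_eq_inner)
qed

lemma exp_mult_deriv:
  fixes g :: "real \<Rightarrow> real"
  assumes "(g has_real_derivative g') (at t)"
  shows "((\<lambda>s. exp (- (L * s)) * g s) has_real_derivative
     exp (- (L * t)) * (- L) * g t + g' * exp (- (L * t))) (at t)"
proof -
  have "((\<lambda>s. exp (- (L * s))) has_real_derivative exp (- (L * t)) * (- L)) (at t)"
    by (auto intro!: derivative_eq_intros)
  from DERIV_mult[OF this assms] show ?thesis .
qed

lemma pos_term1:
  fixes vi vj vk :: "'a::real_inner"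
  assumes "norm (vk - vj) \<le> norm (vi - vj)"
  shows "inner (vi - vj) (vk - vi) \<le> 0"
proof -
  have "inner (vi - vj) (vk - vi) = inner (vi - vj) (vk - vj) - inner (vi - vj) (vi - vj)"
    by (simp add: inner_diff_right)
  also have "\<dots> \<le> norm (vi - vj) * norm (vk - vj) - norm (vi - vj)^2"
    using norm_cauchy_schwarz[of "vi - vj" "vk - vj"] by (simp add: power2_norm_eq_inner)
  also have "\<dots> \<le> 0" using assms by (simp add: power2_eq_square mult_left_mono)
  finally show ?thesis .
qed

lemma pos_term2:
  fixes vi vj vk :: "'a::real_inner"
  assumes "norm (vk - vi) \<le> norm (vi - vj)"
  shows "inner (vi - vj) (vk - vj) \<ge> 0"
proof -
  have "inner (vi - vj) (vk - vj) = inner (vi - vj) (vk - vi) + inner (vi - vj) (vi - vj)"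
    by (simp add: inner_diff_right)
  moreover have "- inner (vi - vj) (vk - vi) \<le> norm (vi - vj) * norm (vk - vi)"
    using norm_cauchy_schwarz[of "vi - vj" "vi - vk"] by (simp add: inner_diff_right norm_minus_commute)
  moreover have "norm (vi - vj) * norm (vk - vi) \<le> norm (vi - vj)^2" using assms by (simp add: power2_eq_square mult_left_mono)
  ultimately show ?thesis by (simp add: power2_norm_eq_inner)
qed
theorem proposition7p11:
  fixes N :: nat and psi :: "real \<Rightarrow> real" and K :: real and ts :: "nat \<Rightarrow> real"
    and x v :: "nat \<Rightarrow> real \<Rightarrow> 'd::euclidean_space"
  assumes N2: "N \<ge> 2"
    and psi_pos: "\<And>r. psi r > 0"
    and psi_bdd: "bounded (range psi)"
    and psi_cont: "continuous_on UNIV psi"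
    and K_def: "K = (SUP r. \<bar>psi r\<bar>)"
    and psi_div: "filterlim (\<lambda>X. integral {0..X} (\<lambda>y. Inf (psi ` {0..y}))) at_top at_top"
    and ts_mono: "strict_mono ts"
    and ts0: "ts 0 = 0"
    and ts_lim: "filterlim ts at_top sequentially"
    and gap_neg: "\<And>n. ts (2*n+2) - ts (2*n+1) < ln 2 / K"
    and gap_pos: "\<And>n. ts (2*n+1) - ts (2*n) > 1 / K"
    and x_cont: "\<And>i. i < N \<Longrightarrow> continuous_on {0..} (x i)"
    and v_cont: "\<And>i. i < N \<Longrightarrow> continuous_on {0..} (v i)"
    and x_ode: "\<And>i t. i < N \<Longrightarrow> t > 0 \<Longrightarrow> (x i has_vector_derivative v i t) (at t)"
    and v_ode: "\<And>i t. i < N \<Longrightarrow> t > 0 \<Longrightarrow> t \<notin> range ts \<Longrightarrow>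
        (v i has_vector_derivative
           ((1 / (real N - 1)) *\<^sub>R (\<Sum>j\<in>{..<N} - {i}.
              (alpha_sw ts t * psi (norm (x i t - x j t))) *\<^sub>R (v j t - v i t)))) (at t)"
    and summ: "summable (\<lambda>p. ln (exp (K * (ts (2*p+2) - ts (2*p+1)))
                                / (2 - exp (K * (ts (2*p+2) - ts (2*p+1))))))"
  shows "\<forall>t\<ge>0. dV N v t \<le> exp (\<Sum>p. ln (exp (K * (ts (2*p+2) - ts (2*p+1)))
                                / (2 - exp (K * (ts (2*p+2) - ts (2*p+1)))))) * dV N v 0"
proof -
  define c where "c = 1 / (real N - 1)"
  define F where "F i t = c *\<^sub>R (\<Sum>j\<in>{..<N} - {i}.
              (alpha_sw ts t * psi (norm (x i t - x j t))) *\<^sub>R (v j t - v i t))" for i t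
  define D where "D t = dV N v t" for t
  have vder: "\<And>i t. i < N \<Longrightarrow> t > 0 \<Longrightarrow> t \<notin> range ts \<Longrightarrow> (v i has_vector_derivative F i t) (at t)"
    using v_ode by (simp add: F_def c_def)
  have c0: "c > 0" using N2 by (simp add: c_def)
  have cN: "c * (real N - 1) = 1" using N2 by (simp add: c_def)
  obtain B where B: "\<And>r. \<bar>psi r\<bar> \<le> B" using psi_bdd unfolding bounded_iff by auto
  have bddK: "bdd_above (range (\<lambda>r. \<bar>psi r\<bar>))" by (rule bdd_aboveI2[where M=B]) (rule B)
  have Kpsi: "\<And>r. psi r \<le> K"
  proof -
    fix r
    have "\<bar>psi r\<bar> \<le> K" unfolding K_def using bddK by (rule cSUP_upper[OF UNIV_I])
    thus "psi r \<le> K" by linarith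
  qed
  have K0: "K > 0" using psi_pos[of 0] Kpsi[of 0] by linarith
  have alpha_abs: "\<And>t. \<bar>alpha_sw ts t\<bar> = 1" by (simp add: alpha_sw_def)
  have cardN: "\<And>i. i < N \<Longrightarrow> real (card ({..<N} - {i})) = real N - 1"
    using N2 by (simp add: card_Diff_singleton of_nat_diff)
  have Fbound: "norm (F i t) \<le> K * Bd"
    if i: "i < N" and bd: "\<And>k. k < N \<Longrightarrow> norm (v k t - v i t) \<le> Bd" for i t Bd
  proof -
    have "norm (\<Sum>j\<in>{..<N} - {i}. (alpha_sw ts t * psi (norm (x i t - x j t))) *\<^sub>R (v j t - v i t))
       \<le> (\<Sum>j\<in>{..<N} - {i}. norm ((alpha_sw ts t * psi (norm (x i t - x j t))) *\<^sub>R (v j t - v i t)))"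
      by (rule norm_sum)
    also have "\<dots> \<le> (\<Sum>j\<in>{..<N} - {i}. K * Bd)"
    proof (rule sum_mono)
      fix j assume j: "j \<in> {..<N} - {i}"
      have "norm ((alpha_sw ts t * psi (norm (x i t - x j t))) *\<^sub>R (v j t - v i t))
          = psi (norm (x i t - x j t)) * norm (v j t - v i t)"
        using alpha_abs[of t] psi_pos[of "norm (x i t - x j t)"] by (simp add: abs_mult)
      also have "\<dots> \<le> K * Bd"
        using Kpsi bd[of j] j K0 by (intro mult_mono) auto
      finally show "norm ((alpha_sw ts t * psi (norm (x i t - x j t))) *\<^sub>R (v j t - v i t)) \<le> K * Bd" .
    qed
    also have "\<dots> = (real N - 1) * (K * Bd)" using cardN[OF i] by simp
    finally have "c * norm (\<Sum>j\<in>{..<N} - {i}. (alpha_sw ts t * psi (norm (x i t - x j t))) *\<^sub>R (v j t - v i t))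
        \<le> c * ((real N - 1) * (K * Bd))" using c0 by (intro mult_left_mono) auto
    also have "\<dots> = K * Bd" using cN by (simp add: algebra_simps)
    finally show ?thesis using c0 by (simp add: F_def)
  qed
  have Fpos: "inner (v i t - v j t) (F i t - F j t) \<le> 0"
    if i: "i < N" and j: "j < N" and al: "alpha_sw ts t = 1"
      and mx: "\<And>k l. k < N \<Longrightarrow> l < N \<Longrightarrow> norm (v k t - v l t) \<le> norm (v i t - v j t)" for i j t
  proof -
    have "inner (v i t - v j t) (F i t) = c * (\<Sum>k\<in>{..<N} - {i}. psi (norm (x i t - x k t)) * inner (v i t - v j t) (v k t - v i t))"
      by (simp add: F_def al inner_sum_right)
    also have "\<dots> \<le> 0"
    proof -
      have "(\<Sum>k\<in>{..<N} - {i}. psi (norm (x i t - x k t)) * inner (v i t - v j t) (v k t - v i t)) \<le> 0"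
      proof (rule sum_nonpos)
        fix k assume k: "k \<in> {..<N} - {i}"
        have "inner (v i t - v j t) (v k t - v i t) \<le> 0" using mx[of k j] k j by (intro pos_term1) auto
        thus "psi (norm (x i t - x k t)) * inner (v i t - v j t) (v k t - v i t) \<le> 0"
          using psi_pos by (simp add: mult_nonneg_nonpos less_imp_le)
      qed
      thus ?thesis using c0 by (simp add: mult_nonneg_nonpos)
    qed
    finally have 1: "inner (v i t - v j t) (F i t) \<le> 0" .
    have "inner (v i t - v j t) (F j t) = c * (\<Sum>k\<in>{..<N} - {j}. psi (norm (x j t - x k t)) * inner (v i t - v j t) (v k t - v j t))"
      by (simp add: F_def al inner_sum_right)
    also have "\<dots> \<ge> 0"
    proof -
      have "(\<Sum>k\<in>{..<N} - {j}. psi (norm (x j t - x k t)) * inner (v i t - v j t) (v k t - v j t)) \<ge> 0"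
      proof (rule sum_nonneg)
        fix k assume k: "k \<in> {..<N} - {j}"
        have "inner (v i t - v j t) (v k t - v j t) \<ge> 0" using mx[of k i] k i by (intro pos_term2) auto
        thus "psi (norm (x j t - x k t)) * inner (v i t - v j t) (v k t - v j t) \<ge> 0"
          using psi_pos by (simp add: less_imp_le)
      qed
      thus ?thesis using c0 by simp
    qed
    finally have 2: "inner (v i t - v j t) (F j t) \<ge> 0" .
    show ?thesis using 1 2 by (simp add: inner_diff_right)
  qed
  have Dset: "\<And>t. {norm (v i t - v j t) | i j. i < N \<and> j < N} = (\<lambda>p. norm (v (fst p) t - v (snd p) t)) ` ({..<N} \<times> {..<N})"
    by force
  have Dge: "norm (v i t - v j t) \<le> D t" if "i < N" "j < N" for t i j
    unfolding D_def dV_def Dset using that by (intro Max_ge) (auto intro!: image_eqI[where x="(i,j)"])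
  have Dle: "D t \<le> Bd" if "\<And>i j. i < N \<Longrightarrow> j < N \<Longrightarrow> norm (v i t - v j t) \<le> Bd" for t Bd
    unfolding D_def dV_def Dset using that N2 by (subst Max_le_iff) (auto simp: lessThan_empty_iff)
  have D0: "\<And>t. D t \<ge> 0" using Dge[of 0 0] N2 by (meson norm_ge_zero order_trans less_le_trans zero_less_numeral)
  have tsnn: "\<And>k. ts k \<ge> 0" using ts0 ts_mono by (metis le0 strict_mono_less_eq)
  have interior: "t > 0 \<and> t \<notin> range ts" if "ts k < t" "t < ts (Suc k)" for k t
  proof
    show "t > 0" using that tsnn[of k] by linarith
    show "t \<notin> range ts"
    proof
      assume "t \<in> range ts"
      then obtain m where m: "t = ts m" by auto
      have "k < m" using that m ts_mono by (simp add: strict_mono_less)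
      moreover have "m < Suc k" using that m ts_mono by (simp add: strict_mono_less)
      ultimately show False by simp
    qed
  qed
  let ?P = "{..<N} \<times> {..<N}"
  have vdiff_cont: "continuous_on {a..b} (\<lambda>s. v i s - v j s)" if "i < N" "j < N" "0 \<le> a" for i j a b
  proof -
    have "{a..b} \<subseteq> {0..}" using that by auto
    thus ?thesis using continuous_on_subset[OF v_cont[OF that(1)]] continuous_on_subset[OF v_cont[OF that(2)]]
      by (intro continuous_on_diff) auto
  qed
  have vdiff_der: "((\<lambda>s. v i s - v j s) has_vector_derivative (F i s - F j s)) (at s)"
    if "i < N" "j < N" "ts k < s" "s < ts (Suc k)" for i j k s
    using interior[OF that(3,4)] vder that by (intro has_vector_derivative_diff) auto
  have maxpair: "norm (v k s - v l s) \<le> norm (v i s - v j s)"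
    if "norm (v k s - v l s)^2 \<le> norm (v i s - v j s)^2" for i j k l s
    by (rule power2_le_imp_le[OF that norm_ge_zero])
  have pos_phase: "D t \<le> D (ts (2*n))" if t: "t \<in> {ts (2*n)..ts (2*n+1)}" for n t
  proof -
    define a where "a = ts (2*n)"
    define g where "g p s = norm (v (fst p) s - v (snd p) s)^2" for p s
    have "\<forall>p\<in>?P. g p t \<le> D a ^ 2"
    proof
      fix p assume p: "p \<in> ?P"
      show "g p t \<le> D a ^ 2"
      proof (rule dini_max[where P="?P" and a=a and b=t and f=g and
            f'="\<lambda>p s. 2 * inner (v (fst p) s - v (snd p) s) (F (fst p) s - F (snd p) s)", OF _ _ _ _ _ _ p])
        show "finite ?P" by simp
        show "a \<le> t" using t by (simp add: a_def)
        show "continuous_on {a..t} (g q)" if "q \<in> ?P" for q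
          using vdiff_cont[of "fst q" "snd q" a t] that tsnn[of "2*n"] unfolding g_def
          by (intro continuous_on_power continuous_on_norm) (auto simp: a_def)
        show "(g q has_real_derivative
           2 * inner (v (fst q) s - v (snd q) s) (F (fst q) s - F (snd q) s)) (at s)"
          if "q \<in> ?P" "s \<in> {a<..<t}" for q s
          using that t unfolding g_def by (auto simp: a_def intro!: normsq_deriv vdiff_der[where k="2*n"])
        show "2 * inner (v (fst q) s - v (snd q) s) (F (fst q) s - F (snd q) s) \<le> 0"
          if q: "q \<in> ?P" and s: "s \<in> {a<..<t}"
            and mx: "\<forall>r\<in>?P. g r s \<le> g q s" for q s
        proof -
          have s0: "s \<noteq> 0" using s tsnn[of "2*n"] by (auto simp: a_def)
          have "ts (2*n) < s \<and> s < ts (2*n+1)" using s t by (auto simp: a_def)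
          hence ex: "\<exists>m. ts (2*m) < s \<and> s < ts (2*m+1)" by blast
          have "alpha_sw ts s = 1" using ex s0 unfolding alpha_sw_def by presburger
          moreover have "norm (v k s - v l s) \<le> norm (v (fst q) s - v (snd q) s)" if "k < N" "l < N" for k l
            using mx that unfolding g_def by (intro maxpair) auto
          ultimately show ?thesis using Fpos[of "fst q" "snd q" s] q by auto
        qed
        show "g q a \<le> D a ^ 2" if "q \<in> ?P" for q
          using Dge[of "fst q" "snd q" a] that unfolding g_def by (auto intro!: power_mono)
      qed
    qed
    hence "norm (v i t - v j t) \<le> D a" if "i < N" "j < N" for i j
    proof -
      have "norm (v i t - v j t)^2 \<le> D a ^ 2" using \<open>\<forall>p\<in>?P. g p t \<le> D a ^ 2\<close> that unfolding g_def by auto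
      thus ?thesis by (rule power2_le_imp_le[OF _ D0])
    qed
    thus ?thesis unfolding a_def by (intro Dle) auto
  qed
  have neg_phase: "D t \<le> exp (2*K*(t - ts k)) * D (ts k)" if t: "t \<in> {ts k..ts (Suc k)}" for k t
  proof -
    define a where "a = ts k"
    define g0 where "g0 p s = norm (v (fst p) s - v (snd p) s)^2" for p s
    define g where "g p s = exp (- ((4*K) * s)) * g0 p s" for p s
    define g0' where "g0' p s = 2 * inner (v (fst p) s - v (snd p) s) (F (fst p) s - F (snd p) s)" for p s
    have "\<forall>p\<in>?P. g p t \<le> exp (- ((4*K) * a)) * D a ^ 2"
    proof
      fix p assume p: "p \<in> ?P"
      show "g p t \<le> exp (- ((4*K) * a)) * D a ^ 2"
      proof (rule dini_max[where P="?P" and a=a and b=t and f=g and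
            f'="\<lambda>p s. exp (- ((4*K) * s)) * (- (4*K)) * g0 p s + g0' p s * exp (- ((4*K) * s))", OF _ _ _ _ _ _ p])
        show "finite ?P" by simp
        show "a \<le> t" using t by (simp add: a_def)
        show "continuous_on {a..t} (g q)" if "q \<in> ?P" for q
        proof -
          have "continuous_on {a..t} (g0 q)"
            using vdiff_cont[of "fst q" "snd q" a t] that tsnn[of k] unfolding g0_def
            by (intro continuous_on_power continuous_on_norm) (auto simp: a_def)
          thus ?thesis unfolding g_def by (intro continuous_on_mult continuous_on_exp continuous_on_minus continuous_on_mult continuous_on_const continuous_on_id) 
        qed
        show "(g q has_real_derivative exp (- ((4*K) * s)) * (- (4*K)) * g0 q s + g0' q s * exp (- ((4*K) * s))) (at s)"
          if "q \<in> ?P" "s \<in> {a<..<t}" for q s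
        proof -
          have "(g0 q has_real_derivative g0' q s) (at s)"
            using that t unfolding g0_def g0'_def by (auto simp: a_def intro!: normsq_deriv vdiff_der[where k=k])
          from exp_mult_deriv[OF this, of "4*K"] show ?thesis unfolding g_def .
        qed
        show "exp (- ((4*K) * s)) * (- (4*K)) * g0 q s + g0' q s * exp (- ((4*K) * s)) \<le> 0"
          if q: "q \<in> ?P" and s: "s \<in> {a<..<t}" and mx: "\<forall>r\<in>?P. g r s \<le> g q s" for q s
        proof -
          obtain i j where qij: "q = (i, j)" by (cases q)
          have ij: "i < N" "j < N" using q qij by auto
          have mx2: "norm (v k' s - v l s) \<le> norm (v i s - v j s)" if "k' < N" "l < N" for k' l
          proof -
            have "g (k', l) s \<le> g q s" using mx that by auto
            hence "g0 (k', l) s \<le> g0 q s" unfolding g_def by simp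
            thus ?thesis unfolding g0_def qij by (intro maxpair) simp
          qed
          have Fi: "norm (F i s) \<le> K * norm (v i s - v j s)" using ij mx2 by (intro Fbound) auto
          have Fj: "norm (F j s) \<le> K * norm (v i s - v j s)"
          proof (rule Fbound[OF ij(2)])
            fix k' assume "k' < N"
            thus "norm (v k' s - v j s) \<le> norm (v i s - v j s)" using mx2 ij by auto
          qed
          have "inner (v i s - v j s) (F i s - F j s) \<le> norm (v i s - v j s) * norm (F i s - F j s)"
            by (rule norm_cauchy_schwarz)
          also have "\<dots> \<le> norm (v i s - v j s) * (K * norm (v i s - v j s) + K * norm (v i s - v j s))"
            using Fi Fj norm_triangle_ineq4[of "F i s" "F j s"] by (intro mult_left_mono) auto
          finally have "g0' q s \<le> 4 * K * g0 q s"
            unfolding g0'_def g0_def qij by (simp add: power2_eq_square algebra_simps)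
          hence "g0' q s - 4 * K * g0 q s \<le> 0" by simp
          hence "exp (- ((4*K) * s)) * (g0' q s - 4 * K * g0 q s) \<le> 0" by (simp add: mult_nonneg_nonpos)
          thus ?thesis by (simp add: algebra_simps)
        qed
        show "g q a \<le> exp (- ((4*K) * a)) * D a ^ 2" if "q \<in> ?P" for q
          using Dge[of "fst q" "snd q" a] that unfolding g_def g0_def by (auto intro!: power_mono)
      qed
    qed
    hence "norm (v i t - v j t) \<le> exp (2*K*(t - a)) * D a" if "i < N" "j < N" for i j
    proof -
      have "exp (- ((4*K) * t)) * norm (v i t - v j t)^2 \<le> exp (- ((4*K) * a)) * D a ^ 2"
        using \<open>\<forall>p\<in>?P. g p t \<le> exp (- ((4*K) * a)) * D a ^ 2\<close> that unfolding g_def g0_def by auto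
      hence "exp ((4*K) * t) * (exp (- ((4*K) * t)) * norm (v i t - v j t)^2) \<le> exp ((4*K) * t) * (exp (- ((4*K) * a)) * D a ^ 2)"
        by (intro mult_left_mono) auto
      also have "exp ((4*K) * t) * (exp (- ((4*K) * a)) * D a ^ 2) = (exp (2*K*(t - a)) * D a)^2"
      proof -
        have e: "exp ((4*K) * t) * exp (- ((4*K) * a)) = exp (2*K*(t - a)) * exp (2*K*(t - a))"
          unfolding mult_exp_exp by (simp add: algebra_simps)
        show ?thesis by (simp add: power2_eq_square mult.assoc[symmetric] e)
      qed
      also have "exp ((4*K) * t) * (exp (- ((4*K) * t)) * norm (v i t - v j t)^2) = norm (v i t - v j t)^2"
        by (simp add: mult.assoc[symmetric] mult_exp_exp)
      finally have "norm (v i t - v j t)^2 \<le> (exp (2*K*(t - a)) * D a)^2" .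
      thus ?thesis by (rule power2_le_imp_le) (simp add: D0)
    qed
    thus ?thesis unfolding a_def by (intro Dle) auto
  qed
  define L where "L = (\<lambda>p. ln (exp (K * (ts (2*p+2) - ts (2*p+1)))
                                / (2 - exp (K * (ts (2*p+2) - ts (2*p+1))))))"
  have Lge: "2 * K * (ts (2*p+2) - ts (2*p+1)) \<le> L p" for p
  proof -
    define tau where "tau = ts (2*p+2) - ts (2*p+1)"
    define y where "y = exp (K * tau)"
    have y0: "y > 0" by (simp add: y_def)
    have "K * tau < ln 2" using gap_neg[of p] K0 unfolding tau_def by (simp add: pos_less_divide_eq mult.commute)
    hence "y < exp (ln 2)" unfolding y_def by (subst exp_less_cancel_iff)
    hence y2: "y < 2" by simp
    have "y * (y - 1)^2 \<ge> 0" using y0 by simp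
    hence "y * y * (2 - y) \<le> y" by (simp add: power2_eq_square algebra_simps)
    hence yy: "y * y \<le> y / (2 - y)" using y2 by (simp add: pos_le_divide_eq)
    have "exp (2 * K * tau) = y * y" unfolding y_def mult_exp_exp by simp
    hence "2 * K * tau = ln (y * y)" by (metis ln_exp)
    also have "\<dots> \<le> ln (y / (2 - y))" using yy y0 y2 by (subst ln_le_cancel_iff) auto
    finally show ?thesis unfolding L_def y_def tau_def by simp
  qed
  have Lnn: "0 \<le> L p" for p
  proof -
    have "ts (2*p+1) < ts (2*p+2)" using ts_mono by (simp add: strict_mono_less)
    thus ?thesis using Lge[of p] K0 by (smt (verit) mult_pos_pos)
  qed
  define E where "E m = exp (\<Sum>p<m. L p) * D 0" for m
  define Bnd where "Bnd = exp (\<Sum>p. L p) * D 0"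
  have EB: "E m \<le> Bnd" for m
  proof -
    have "(\<Sum>p<m. L p) \<le> (\<Sum>p. L p)" using summ unfolding L_def[symmetric]
      by (intro sum_le_suminf) (auto simp: Lnn)
    thus ?thesis unfolding E_def Bnd_def using D0[of 0] by (intro mult_right_mono) auto
  qed
  have negstep: "exp (2*K*(t - ts (2*n+1))) * D (ts (2*n+1)) \<le> E (Suc n)"
    if t: "t \<le> ts (2*n+2)" and IH: "D (ts (2*n)) \<le> E n" for t n
  proof -
    have "2*K*(t - ts (2*n+1)) \<le> 2 * K * (ts (2*n+2) - ts (2*n+1))" using t K0 by simp
    also have "\<dots> \<le> L n" by (rule Lge)
    finally have "exp (2*K*(t - ts (2*n+1))) * D (ts (2*n+1)) \<le> exp (L n) * D (ts (2*n+1))"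
      using D0 by (intro mult_right_mono) auto
    also have "\<dots> \<le> exp (L n) * D (ts (2*n))"
      using pos_phase[of "ts (2*n+1)" n] ts_mono by (intro mult_left_mono) (auto simp: strict_mono_less_eq)
    also have "\<dots> \<le> exp (L n) * E n" using IH by (intro mult_left_mono) auto
    also have "\<dots> = E (Suc n)" by (simp add: E_def exp_add)
    finally show ?thesis .
  qed
  have Ets: "D (ts (2*n)) \<le> E n" for n
  proof (induction n)
    case 0
    show ?case by (simp add: E_def ts0)
  next
    case (Suc n)
    have "D (ts (2*Suc n)) \<le> exp (2*K*(ts (2*Suc n) - ts (2*n+1))) * D (ts (2*n+1))"
      using neg_phase[of "ts (2*Suc n)" "2*n+1"] ts_mono by (auto simp: strict_mono_less_eq)
    also have "\<dots> \<le> E (Suc n)" using Suc by (intro negstep) auto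
    finally show ?case .
  qed
  have cover: "\<exists>k. ts k \<le> t \<and> t \<le> ts (Suc k)" if t0: "t \<ge> 0" for t
  proof -
    have "eventually (\<lambda>m. t + 1 \<le> ts m) sequentially" using ts_lim unfolding filterlim_at_top by blast
    then obtain m0 where "t + 1 \<le> ts m0" by (auto simp: eventually_sequentially)
    hence ex: "\<exists>m. t < ts m" by (intro exI[of _ m0]) auto
    define m where "m = (LEAST m. t < ts m)"
    have m1: "t < ts m" unfolding m_def using ex by (metis LeastI)
    have "m \<noteq> 0" using m1 t0 ts0 by (metis not_less)
    then obtain k where k: "m = Suc k" by (cases m) auto
    have "\<not> t < ts k" using k unfolding m_def by (metis Suc_n_not_le_n Least_le)
    thus ?thesis using m1 k by (intro exI[of _ k]) auto
  qed
  have "D t \<le> Bnd" if t0: "t \<ge> 0" for t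
  proof -
    obtain k where k: "ts k \<le> t" "t \<le> ts (Suc k)" using cover[OF t0] by blast
    obtain n where "k = 2*n \<or> k = 2*n+1" by (metis dvd_mult_div_cancel odd_two_times_div_two_succ)
    thus ?thesis
    proof
      assume kn: "k = 2*n"
      have "D t \<le> D (ts (2*n))" using k kn by (intro pos_phase) auto
      also have "\<dots> \<le> E n" by (rule Ets)
      finally show ?thesis using EB[of n] by simp
    next
      assume kn: "k = 2*n+1"
      have "D t \<le> exp (2*K*(t - ts (2*n+1))) * D (ts (2*n+1))" using k kn by (intro neg_phase) auto
      also have "\<dots> \<le> E (Suc n)" using k kn Ets[of n] by (intro negstep) auto
      finally show ?thesis using EB[of "Suc n"] by simp
    qed
  qed
  thus ?thesis unfolding D_def Bnd_def L_def by blast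
qed

end
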